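(* For $n \ge 3$, the commutator subgroup $TW_n'$ is generated by the elements $$w\,(\tau_j\tau_{j+1}\tau_j\tau_{j+1})\,w^{-1} \quad\text{and}\quad w\,(\tau_{j+1}\tau_j\tau_{j+1}\tau_j)\,w^{-1},$$ where $j$ ranges over $\{1,2,\dots,n-2\}$ and $w$ ranges over all products $w=\tau_{i_1}\tau_{i_2}\cdots\tau_{i_s}$ with $s\ge 0$ and $1 \le i_1 < i_2 < \dots < i_s < j$ (the empty product $w=1$ included).
   Context: For $n \ge 2$, the twin group $TW_n$ is the group with generators $\tau_1,\dots,\tau_{n-1}$ and defining relations $\tau_i^2=1$ for all $i$, and $\tau_i\tau_j=\tau_j\tau_i$ whenever $|i-j|>1$. $G'$ denotes the commutator subgroup of a group $G$. *)

theory Defs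
  imports "HOL-Algebra.Algebra"
begin

text \<open>The twin group TW_n, constructed from its presentation: generators tau_1..tau_(n-1),
  relations tau_i^2 = 1 and tau_i tau_j = tau_j tau_i for |i-j|>1.
  Words are lists of generator indices in {1..n-1}; since every generator is an
  involution, positive words suffice.\<close>

definition tw_words :: "nat \<Rightarrow> nat list set" where
  "tw_words n = {w. set w \<subseteq> {1..<n}}"

definition tw_step :: "nat \<Rightarrow> (nat list \<times> nat list) set" where
  "tw_step n =
     {(u @ [i, i] @ v, u @ v) | u v i. set u \<subseteq> {1..<n} \<and> set v \<subseteq> {1..<n} \<and> i \<in> {1..<n}}
   \<union> {(u @ [i, j] @ v, u @ [j, i] @ v) | u v i j.
        set u \<subseteq> {1..<n} \<and> set v \<subseteq> {1..<n} \<and> i \<in> {1..<n} \<and> j \<in> {1..<n}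
        \<and> (i + 1 < j \<or> j + 1 < i)}"

definition tw_eq :: "nat \<Rightarrow> (nat list \<times> nat list) set" where
  "tw_eq n = (tw_step n \<union> (tw_step n)\<inverse>)\<^sup>* \<inter> (tw_words n \<times> tw_words n)"

definition TW :: "nat \<Rightarrow> nat list set monoid" where
  "TW n = \<lparr> carrier = tw_words n // tw_eq n,
            monoid.mult = (\<lambda>A B. \<Union>a\<in>A. \<Union>b\<in>B. tw_eq n `` {a @ b}),
            monoid.one = tw_eq n `` {[]} \<rparr>"

definition tau :: "nat \<Rightarrow> nat \<Rightarrow> nat list set" where
  "tau n i = tw_eq n `` {[i]}"

definition tw_prod :: "nat \<Rightarrow> nat list \<Rightarrow> nat list set" where
  "tw_prod n is = foldr (\<lambda>i x. tau n i \<otimes>\<^bsub>TW n\<^esub> x) is \<one>\<^bsub>TW n\<^esub>"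

end

theory Submission
  imports Defs
begin

lemma step_del: "set u \<subseteq> {1..<n} \<Longrightarrow> set v \<subseteq> {1..<n} \<Longrightarrow> i \<in> {1..<n} \<Longrightarrow>
  (u@[i,i]@v, u@v) \<in> tw_step n"
  unfolding tw_step_def by (intro UnI1 CollectI exI[of _ u] exI[of _ v] exI[of _ i]) auto

lemma step_swap: "set u \<subseteq> {1..<n} \<Longrightarrow> set v \<subseteq> {1..<n} \<Longrightarrow> i \<in> {1..<n} \<Longrightarrow>
  j \<in> {1..<n} \<Longrightarrow> i + 1 < j \<or> j + 1 < i \<Longrightarrow> (u@[i,j]@v, u@[j,i]@v) \<in> tw_step n"
  unfolding tw_step_def apply (rule UnI2)
  apply (rule CollectI)
  apply (rule exI[of _ u])
  apply (rule exI[of _ v], rule exI[of _ i], rule exI[of _ j])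
  apply (intro conjI refl)
  apply assumption+
  done

abbreviation "twR n \<equiv> tw_step n \<union> (tw_step n)\<inverse>"

lemma step_app:
  assumes "(x,y) \<in> tw_step n" "set u \<subseteq> {1..<n}" "set v \<subseteq> {1..<n}"
  shows "(u@x@v, u@y@v) \<in> tw_step n"
proof -
  from assms(1) consider
    (a) u' v' i where "x = u' @ [i, i] @ v'" "y = u' @ v'" "set u' \<subseteq> {1..<n}" "set v' \<subseteq> {1..<n}" "i \<in> {1..<n}"
  | (b) u' v' i j where "x = u' @ [i, j] @ v'" "y = u' @ [j, i] @ v'" "set u' \<subseteq> {1..<n}" "set v' \<subseteq> {1..<n}"
        "i \<in> {1..<n}" "j \<in> {1..<n}" "i + 1 < j \<or> j + 1 < i"
    unfolding tw_step_def by blast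
  then show ?thesis
  proof cases
    case a
    have "set (u@u') \<subseteq> {1..<n}" "set (v'@v) \<subseteq> {1..<n}" using a(3,4) assms(2,3) by auto
    from step_del[OF this a(5)] show ?thesis using a by simp
  next
    case b
    have "set (u@u') \<subseteq> {1..<n}" "set (v'@v) \<subseteq> {1..<n}" using b(3,4) assms(2,3) by auto
    from step_swap[OF this b(5,6,7)] show ?thesis using b by simp
  qed
qed

lemma R_app:
  assumes "(x,y) \<in> (twR n)\<^sup>*" "set u \<subseteq> {1..<n}" "set v \<subseteq> {1..<n}"
  shows "(u@x@v, u@y@v) \<in> (twR n)\<^sup>*"
  using assms(1)
proof (induction rule: rtrancl_induct)
  case base
  then show ?case by simp
next
  case (step y z)
  then have "(u@y@v, u@z@v) \<in> twR n" using step_app[OF _ assms(2,3)] by blast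
  then show ?case using step(3) by (meson rtrancl.rtrancl_into_rtrancl)
qed

lemma E_equiv: "equiv (tw_words n) (tw_eq n)"
proof (rule equivI)
  show "tw_eq n \<subseteq> tw_words n \<times> tw_words n" unfolding tw_eq_def by auto
  show "refl_on (tw_words n) (tw_eq n)" unfolding refl_on_def tw_eq_def by auto
  have c: "(twR n)\<inverse> = twR n" by auto
  have "(x,y) \<in> (twR n)\<^sup>* \<Longrightarrow> (y,x) \<in> (twR n)\<^sup>*" for x y
  proof -
    assume "(x,y) \<in> (twR n)\<^sup>*"
    then have "(y,x) \<in> ((twR n)\<^sup>*)\<inverse>" by simp
    then show ?thesis unfolding rtrancl_converse[symmetric] c .
  qed
  then show "sym (tw_eq n)" unfolding sym_def tw_eq_def by auto
  show "trans (tw_eq n)" unfolding trans_def tw_eq_def by auto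
qed

lemma E_words: "(a,b) \<in> tw_eq n \<Longrightarrow> a \<in> tw_words n \<and> b \<in> tw_words n"
  unfolding tw_eq_def by auto

lemma E_cong:
  assumes "(a,b) \<in> tw_eq n" "(c,d) \<in> tw_eq n"
  shows "(a@c, b@d) \<in> tw_eq n"
proof -
  have w: "set a \<subseteq> {1..<n}" "set b \<subseteq> {1..<n}" "set c \<subseteq> {1..<n}" "set d \<subseteq> {1..<n}"
    using E_words[OF assms(1)] E_words[OF assms(2)] unfolding tw_words_def by auto
  have 1: "(a@c, b@c) \<in> (twR n)\<^sup>*"
    using R_app[of a b n "[]" c] assms(1) w unfolding tw_eq_def by auto
  have 2: "(b@c, b@d) \<in> (twR n)\<^sup>*"
    using R_app[of c d n b "[]"] assms(2) w unfolding tw_eq_def by auto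
  show ?thesis using 1 2 w unfolding tw_eq_def tw_words_def by auto
qed

lemma step_E: "(x,y) \<in> tw_step n \<Longrightarrow> x \<in> tw_words n \<Longrightarrow> y \<in> tw_words n \<Longrightarrow> (x,y) \<in> tw_eq n"
  unfolding tw_eq_def by auto

abbreviation "cls n x \<equiv> tw_eq n `` {x}"

lemma cls_mult:
  assumes "a \<in> tw_words n" "b \<in> tw_words n"
  shows "cls n a \<otimes>\<^bsub>TW n\<^esub> cls n b = cls n (a@b)"
proof -
  have *: "\<And>a' b'. a' \<in> cls n a \<Longrightarrow> b' \<in> cls n b \<Longrightarrow> cls n (a'@b') = cls n (a@b)"
  proof -
    fix a' b' assume "a' \<in> cls n a" "b' \<in> cls n b"
    then have "(a@b, a'@b') \<in> tw_eq n" using E_cong by auto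
    then show "cls n (a'@b') = cls n (a@b)" using E_equiv by (metis equiv_class_eq)
  qed
  have ne: "a \<in> cls n a" "b \<in> cls n b"
    using assms equiv_class_self[OF E_equiv] by auto
  have eq: "(\<Union>a'\<in>cls n a. \<Union>b'\<in>cls n b. cls n (a'@b')) = (\<Union>a'\<in>cls n a. \<Union>b'\<in>cls n b. cls n (a@b))"
    using * by (intro SUP_cong refl) auto
  have "(\<Union>a'\<in>cls n a. \<Union>b'\<in>cls n b. cls n (a@b)) = cls n (a@b)"
    using ne by blast
  then show ?thesis using eq unfolding TW_def by simp
qed

lemma words_app: "a \<in> tw_words n \<Longrightarrow> b \<in> tw_words n \<Longrightarrow> a@b \<in> tw_words n"
  unfolding tw_words_def by auto

lemma words_rev: "a \<in> tw_words n \<Longrightarrow> rev a \<in> tw_words n"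
  unfolding tw_words_def by auto

lemma rev_cancel: "a \<in> tw_words n \<Longrightarrow> (rev a @ a, []) \<in> tw_eq n"
proof (induction a)
  case Nil
  then show ?case using E_equiv[of n] unfolding equiv_def refl_on_def tw_words_def by auto
next
  case (Cons x a)
  have w: "a \<in> tw_words n" "x \<in> {1..<n}" using Cons.prems unfolding tw_words_def by auto
  have "(rev a @ [x,x] @ a, rev a @ a) \<in> tw_step n"
    using w unfolding tw_words_def by (intro step_del) auto
  then have "(rev a @ [x,x] @ a, rev a @ a) \<in> tw_eq n"
    using w by (intro step_E) (auto simp: tw_words_def)
  moreover have "rev (x#a) @ (x#a) = rev a @ [x,x] @ a" by simp
  moreover have "trans (tw_eq n)" using E_equiv[of n] unfolding equiv_def by blast
  ultimately show ?case using Cons.IH[OF w(1)] by (metis transD)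
qed

lemma TW_carrier: "carrier (TW n) = {cls n a | a. a \<in> tw_words n}"
  unfolding TW_def quotient_def by auto

lemma TW_one: "\<one>\<^bsub>TW n\<^esub> = cls n []"
  unfolding TW_def by simp

lemma nil_word: "[] \<in> tw_words n" unfolding tw_words_def by simp

lemma TW_carrierE: "x \<in> carrier (TW n) \<Longrightarrow> (\<And>a. x = cls n a \<Longrightarrow> a \<in> tw_words n \<Longrightarrow> P) \<Longrightarrow> P"
  unfolding TW_carrier by blast

lemma TW_carrierI: "a \<in> tw_words n \<Longrightarrow> cls n a \<in> carrier (TW n)"
  unfolding TW_carrier by blast

lemma TW_group: "group (TW n)"
proof (rule groupI)
  fix x y assume "x \<in> carrier (TW n)" "y \<in> carrier (TW n)"
  then obtain a b where "x = cls n a" "a \<in> tw_words n" "y = cls n b" "b \<in> tw_words n"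
    by (metis TW_carrierE)
  then show "x \<otimes>\<^bsub>TW n\<^esub> y \<in> carrier (TW n)"
    by (simp add: cls_mult words_app TW_carrierI)
next
  show "\<one>\<^bsub>TW n\<^esub> \<in> carrier (TW n)" unfolding TW_one using nil_word by (rule TW_carrierI)
next
  fix x y z assume "x \<in> carrier (TW n)" "y \<in> carrier (TW n)" "z \<in> carrier (TW n)"
  then obtain a b c where "x = cls n a" "a \<in> tw_words n" "y = cls n b" "b \<in> tw_words n"
     "z = cls n c" "c \<in> tw_words n"
    by (metis TW_carrierE)
  then show "x \<otimes>\<^bsub>TW n\<^esub> y \<otimes>\<^bsub>TW n\<^esub> z = x \<otimes>\<^bsub>TW n\<^esub> (y \<otimes>\<^bsub>TW n\<^esub> z)"
    by (simp add: cls_mult words_app)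
next
  fix x assume "x \<in> carrier (TW n)"
  then obtain a where "x = cls n a" "a \<in> tw_words n" by (metis TW_carrierE)
  then show "\<one>\<^bsub>TW n\<^esub> \<otimes>\<^bsub>TW n\<^esub> x = x"
    unfolding TW_one by (simp add: cls_mult nil_word)
next
  fix x assume "x \<in> carrier (TW n)"
  then obtain a where a: "x = cls n a" "a \<in> tw_words n" by (metis TW_carrierE)
  have e: "cls n (rev a @ a) = cls n []"
    using rev_cancel[OF a(2)] E_equiv by (metis equiv_class_eq)
  have "cls n (rev a) \<otimes>\<^bsub>TW n\<^esub> x = \<one>\<^bsub>TW n\<^esub>"
    unfolding a(1) cls_mult[OF words_rev[OF a(2)] a(2)] e TW_one ..
  then show "\<exists>y\<in>carrier (TW n). y \<otimes>\<^bsub>TW n\<^esub> x = \<one>\<^bsub>TW n\<^esub>"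
    using TW_carrierI[OF words_rev[OF a(2)]] by blast
qed

lemma tw_prod_cls: "a \<in> tw_words n \<Longrightarrow> tw_prod n a = cls n a"
proof (induction a)
  case Nil
  then show ?case unfolding tw_prod_def TW_one by simp
next
  case (Cons x a)
  have w: "a \<in> tw_words n" "[x] \<in> tw_words n" using Cons.prems unfolding tw_words_def by auto
  show ?case using Cons.IH[OF w(1)] cls_mult[OF w(2,1)] unfolding tw_prod_def tau_def by simp
qed

lemma tau_carrier: "1 \<le> i \<Longrightarrow> i < n \<Longrightarrow> tau n i \<in> carrier (TW n)"
  unfolding tau_def TW_carrier tw_words_def by auto

lemma tau_sq: "1 \<le> i \<Longrightarrow> i < n \<Longrightarrow> tau n i \<otimes>\<^bsub>TW n\<^esub> tau n i = \<one>\<^bsub>TW n\<^esub>"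
proof -
  assume i: "1 \<le> i" "i < n"
  have w: "[i] \<in> tw_words n" using i unfolding tw_words_def by auto
  have "([] @ [i,i] @ [], [] @ []) \<in> tw_step n" using i by (intro step_del) auto
  then have "([i,i], []) \<in> tw_eq n" using i by (intro step_E) (auto simp: tw_words_def)
  then show ?thesis unfolding tau_def TW_one cls_mult[OF w w]
    using equiv_class_eq[OF E_equiv] by simp
qed

lemma tau_comm: "1 \<le> i \<Longrightarrow> i < n \<Longrightarrow> 1 \<le> j \<Longrightarrow> j < n \<Longrightarrow> i + 1 < j \<Longrightarrow>
   tau n i \<otimes>\<^bsub>TW n\<^esub> tau n j = tau n j \<otimes>\<^bsub>TW n\<^esub> tau n i"
proof -
  assume ij: "1 \<le> i" "i < n" "1 \<le> j" "j < n" "i + 1 < j"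
  have w: "[i] \<in> tw_words n" "[j] \<in> tw_words n" using ij unfolding tw_words_def by auto
  have "([] @ [i,j] @ [], [] @ [j,i] @ []) \<in> tw_step n" using ij by (intro step_swap) simp_all
  then have "([i,j], [j,i]) \<in> tw_eq n" using ij by (intro step_E) (auto simp: tw_words_def)
  then show ?thesis unfolding tau_def cls_mult[OF w] cls_mult[OF w(2,1)]
    using equiv_class_eq[OF E_equiv] by simp
qed

lemma TW_carrier_prod: "carrier (TW n) = {tw_prod n a | a. set a \<subseteq> {1..<n}}"
  unfolding TW_carrier using tw_prod_cls unfolding tw_words_def by auto


definition tp :: "('a,'b) monoid_scheme \<Rightarrow> (nat \<Rightarrow> 'a) \<Rightarrow> nat list \<Rightarrow> 'a" where
  "tp G t w = foldr (\<lambda>i x. t i \<otimes>\<^bsub>G\<^esub> x) w \<one>\<^bsub>G\<^esub>"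

lemma (in group) cancel_l: "x \<in> carrier G \<Longrightarrow> z \<in> carrier G \<Longrightarrow> x \<otimes> (inv x \<otimes> z) = z"
  by (simp add: m_assoc[symmetric])

lemma (in group) cancel_l2: "x \<in> carrier G \<Longrightarrow> z \<in> carrier G \<Longrightarrow> inv x \<otimes> (x \<otimes> z) = z"
  by (simp add: m_assoc[symmetric])

lemma (in group) comm_inv: "x \<in> carrier G \<Longrightarrow> y \<in> carrier G \<Longrightarrow>
   inv (x \<otimes> y \<otimes> inv x \<otimes> inv y) = y \<otimes> x \<otimes> inv y \<otimes> inv x"
  by (simp add: inv_mult_group m_assoc)

lemma (in group) comm_mult: "a \<in> carrier G \<Longrightarrow> b \<in> carrier G \<Longrightarrow> y \<in> carrier G \<Longrightarrow>
   (a \<otimes> b) \<otimes> y \<otimes> inv (a \<otimes> b) \<otimes> inv y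
   = a \<otimes> (b \<otimes> y \<otimes> inv b \<otimes> inv y) \<otimes> inv a \<otimes> (a \<otimes> y \<otimes> inv a \<otimes> inv y)"
  by (simp add: inv_mult_group m_assoc cancel_l2)

lemma (in group) conj_mult: "x \<in> carrier G \<Longrightarrow> y \<in> carrier G \<Longrightarrow> c \<in> carrier G \<Longrightarrow>
   (x \<otimes> y) \<otimes> c \<otimes> inv (x \<otimes> y) = x \<otimes> (y \<otimes> c \<otimes> inv y) \<otimes> inv x"
  by (simp add: inv_mult_group m_assoc)

lemma (in group) conj_prod3: "x \<in> carrier G \<Longrightarrow> a \<in> carrier G \<Longrightarrow> b \<in> carrier G \<Longrightarrow> c \<in> carrier G \<Longrightarrow>
   x \<otimes> (a \<otimes> b \<otimes> c) \<otimes> inv x = (x \<otimes> a \<otimes> inv x) \<otimes> (x \<otimes> b \<otimes> inv x) \<otimes> (x \<otimes> c \<otimes> inv x)"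
  by (simp add: m_assoc cancel_l2)

locale twg = group G for G (structure) +
  fixes t :: "nat \<Rightarrow> 'a" and n :: nat
  assumes t_closed: "\<lbrakk>1 \<le> i; i < n\<rbrakk> \<Longrightarrow> t i \<in> carrier G"
    and t_sq: "\<lbrakk>1 \<le> i; i < n\<rbrakk> \<Longrightarrow> t i \<otimes> t i = \<one>"
    and t_comm: "\<lbrakk>1 \<le> i; i < n; 1 \<le> j; j < n; i + 1 < j\<rbrakk> \<Longrightarrow> t j \<otimes> t i = t i \<otimes> t j"
    and carrier_P: "x \<in> carrier G \<Longrightarrow> \<exists>w. set w \<subseteq> {1..<n} \<and> x = tp G t w"
begin

abbreviation P where "P \<equiv> tp G t"

lemma P_Nil[simp]: "P [] = \<one>" by (simp add: tp_def)
lemma P_Cons[simp]: "P (i#w) = t i \<otimes> P w" by (simp add: tp_def)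

lemma P_closed: "set w \<subseteq> {1..<n} \<Longrightarrow> P w \<in> carrier G"
  by (induction w) (auto intro!: m_closed t_closed)

lemma t_cancel: "1 \<le> i \<Longrightarrow> i < n \<Longrightarrow> x \<in> carrier G \<Longrightarrow> t i \<otimes> (t i \<otimes> x) = x"
  by (simp add: m_assoc[symmetric] t_closed t_sq)

lemma t_swap: "1 \<le> i \<Longrightarrow> i < n \<Longrightarrow> 1 \<le> j \<Longrightarrow> j < n \<Longrightarrow> i + 1 < j \<Longrightarrow> x \<in> carrier G \<Longrightarrow>
   t j \<otimes> (t i \<otimes> x) = t i \<otimes> (t j \<otimes> x)"
  by (simp add: m_assoc[symmetric] t_closed t_comm)

lemma t_inv: "1 \<le> i \<Longrightarrow> i < n \<Longrightarrow> inv (t i) = t i"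
  using inv_equality[OF t_sq] t_closed by auto

lemma P_snoc: "set w \<subseteq> {1..<n} \<Longrightarrow> 1 \<le> i \<Longrightarrow> i < n \<Longrightarrow> P (w @ [i]) = P w \<otimes> t i"
  by (induction w) (auto simp: m_assoc t_closed P_closed)

lemma t_comm_P: "set w \<subseteq> {1..<n} \<Longrightarrow> 1 \<le> k \<Longrightarrow> k < n \<Longrightarrow> \<forall>i\<in>set w. i+1<k \<or> k+1<i \<Longrightarrow>
   t k \<otimes> P w = P w \<otimes> t k"
proof (induction w)
  case Nil
  then show ?case using t_closed by simp
next
  case (Cons a w)
  have a: "1 \<le> a" "a < n" "set w \<subseteq> {1..<n}" using Cons.prems by auto
  have ta: "t a \<in> carrier G" "t k \<in> carrier G" "P w \<in> carrier G"
    using a Cons.prems t_closed P_closed by auto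
  have c: "t k \<otimes> t a = t a \<otimes> t k"
    using Cons.prems(4) a Cons.prems(2,3) t_comm by (metis list.set_intros(1))
  have "t k \<otimes> P (a#w) = (t k \<otimes> t a) \<otimes> P w" using ta by (simp add: m_assoc)
  also have "\<dots> = t a \<otimes> (t k \<otimes> P w)" using c ta by (simp add: m_assoc)
  also have "\<dots> = t a \<otimes> (P w \<otimes> t k)" using Cons.IH a Cons.prems by simp
  also have "\<dots> = P (a#w) \<otimes> t k" using ta by (simp add: m_assoc)
  finally show ?case .
qed

definition cc :: "nat \<Rightarrow> bool \<Rightarrow> 'a" where
  "cc j e = (if e then t j \<otimes> t (j+1) \<otimes> t j \<otimes> t (j+1) else t (j+1) \<otimes> t j \<otimes> t (j+1) \<otimes> t j)"

definition gen :: "nat \<Rightarrow> nat list \<Rightarrow> bool \<Rightarrow> 'a" where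
  "gen j w e = P w \<otimes> cc j e \<otimes> inv (P w)"

definition valid :: "nat \<Rightarrow> nat list \<Rightarrow> bool" where
  "valid j w \<longleftrightarrow> j \<in> {1..n-2} \<and> sorted_wrt (<) w \<and> set w \<subseteq> {1..<j}"

definition S :: "'a set" where
  "S = {gen j w e | j w e. valid j w}"

abbreviation H where "H \<equiv> generate G S"

lemma valid_D: "valid j w \<Longrightarrow> 1 \<le> j \<and> j + 1 < n \<and> set w \<subseteq> {1..<n} \<and> set w \<subseteq> {1..<j} \<and> sorted_wrt (<) w"
proof -
  assume v: "valid j w"
  then have a: "1 \<le> j" "j \<le> n - 2" "set w \<subseteq> {1..<j}" "sorted_wrt (<) w" unfolding valid_def by auto
  then have "{1..<j} \<subseteq> {1..<n}" by auto
  then show ?thesis using a by auto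
qed

lemma cc_closed: "1 \<le> j \<Longrightarrow> j + 1 < n \<Longrightarrow> cc j e \<in> carrier G"
  unfolding cc_def by (auto intro!: m_closed t_closed)

lemma gen_closed: "valid j w \<Longrightarrow> gen j w e \<in> carrier G"
  unfolding gen_def using valid_D cc_closed P_closed by auto

lemma S_carrier: "S \<subseteq> carrier G"
  unfolding S_def using gen_closed by auto

lemma H_sub: "subgroup H G"
  using generate_is_subgroup[OF S_carrier] .

lemma gen_H: "valid j w \<Longrightarrow> gen j w e \<in> H"
  unfolding S_def by (rule generate.incl) auto

lemma cc_inv: "1 \<le> j \<Longrightarrow> j + 1 < n \<Longrightarrow> inv (cc j e) = cc j (\<not> e)"
  unfolding cc_def using t_closed[of j] t_closed[of "j+1"]
  by (auto simp: inv_mult_group t_inv m_assoc)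

lemma cc_flip1: "1 \<le> j \<Longrightarrow> j + 1 < n \<Longrightarrow> t j \<otimes> cc j e \<otimes> t j = cc j (\<not> e)"
  unfolding cc_def using t_closed[of j] t_closed[of "j+1"]
  by (auto simp: m_assoc t_cancel t_sq)

lemma cc_flip2: "1 \<le> j \<Longrightarrow> j + 1 < n \<Longrightarrow> t (j+1) \<otimes> cc j e \<otimes> t (j+1) = cc j (\<not> e)"
  unfolding cc_def using t_closed[of j] t_closed[of "j+1"]
  by (auto simp: m_assoc t_cancel t_sq)

lemma cc_far: "1 \<le> j \<Longrightarrow> j + 3 \<le> k \<Longrightarrow> k < n \<Longrightarrow> t k \<otimes> cc j e \<otimes> t k = cc j e"
proof -
  assume a: "1 \<le> j" "j + 3 \<le> k" "k < n"
  then have b: "j + 1 < k" "Suc j + 1 < k" "Suc j < n" "1 \<le> k" by auto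
  have s1: "\<And>x. x \<in> carrier G \<Longrightarrow> t k \<otimes> (t j \<otimes> x) = t j \<otimes> (t k \<otimes> x)"
    "\<And>x. x \<in> carrier G \<Longrightarrow> t k \<otimes> (t (Suc j) \<otimes> x) = t (Suc j) \<otimes> (t k \<otimes> x)"
    "t k \<otimes> t j = t j \<otimes> t k" "t k \<otimes> t (Suc j) = t (Suc j) \<otimes> t k"
    "t k \<otimes> t k = \<one>"
    by ((rule t_swap t_comm t_sq); use a b in auto)+
  show ?thesis
  unfolding cc_def using a b t_closed[of j] t_closed[of "j+1"] t_closed[of k]
  by (auto simp: m_assoc s1)
qed

lemma one_H: "\<one> \<in> H" using subgroup.one_closed[OF H_sub] .

lemma conj_H: "D \<in> H \<Longrightarrow> g \<in> H \<Longrightarrow> D \<otimes> g \<otimes> inv D \<in> H"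
  using H_sub by (meson subgroup.m_closed subgroup.m_inv_closed)

lemma toggle:
  assumes k: "1 \<le> k" "k < n"
  shows "sorted_wrt (<) w \<Longrightarrow> set w \<subseteq> {1..<n} \<Longrightarrow> \<exists>D w'.
     (D = \<one> \<or> (\<exists>p. D = gen (k-1) p False \<and> valid (k-1) p \<and> set p \<subseteq> set w))
     \<and> t k \<otimes> P w = D \<otimes> P w' \<and> sorted_wrt (<) w' \<and> set w' \<subseteq> insert k (set w)
     \<and> ((\<forall>i\<in>set w. i < k) \<longrightarrow> w' = w @ [k])"
proof (induction w)
  case Nil
  have "t k \<otimes> P [] = \<one> \<otimes> P [k]" using k t_closed by simp
  then show ?case by (intro exI[of _ "\<one>"] exI[of _ "[k]"]) auto
next
  case (Cons a w)
  have sw: "sorted_wrt (<) w" "\<forall>x\<in>set w. a < x" using Cons.prems(1) by auto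
  have a: "1 \<le> a" "a < n" "set w \<subseteq> {1..<n}" using Cons.prems(2) by auto
  have tk: "t k \<in> carrier G" using k t_closed by auto
  have ta: "t a \<in> carrier G" using a t_closed by auto
  have Pw: "P w \<in> carrier G" using a P_closed by auto
  consider (lt) "a + 1 < k" | (km1) "a + 1 = k" | (eq) "a = k" | (gt) "k < a" by linarith
  then show ?case
  proof cases
    case lt
    obtain D0 w0' where IH: "D0 = \<one> \<or> (\<exists>p. D0 = gen (k-1) p False \<and> valid (k-1) p \<and> set p \<subseteq> set w)"
      "t k \<otimes> P w = D0 \<otimes> P w0'" "sorted_wrt (<) w0'" "set w0' \<subseteq> insert k (set w)"
      "(\<forall>i\<in>set w. i < k) \<longrightarrow> w0' = w @ [k]"
      using Cons.IH[OF sw(1) a(3)] by blast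
    have D0c: "D0 \<in> carrier G" using IH(1) gen_closed by auto
    have "set w0' \<subseteq> {1..<n}" using IH(4) a(3) k by (auto simp: subset_iff)
    then have Pw0': "P w0' \<in> carrier G" using P_closed by auto
    define D where "D = t a \<otimes> D0 \<otimes> t a"
    have "t k \<otimes> P (a#w) = t k \<otimes> (t a \<otimes> P w)" by simp
    also have "\<dots> = t a \<otimes> (t k \<otimes> P w)" using t_swap[of a k "P w"] a k lt Pw by simp
    also have "\<dots> = t a \<otimes> (D0 \<otimes> P w0')" using IH(2) by simp
    also have "\<dots> = D \<otimes> P (a#w0')" unfolding D_def using ta D0c Pw0' a
      by (simp add: m_assoc t_cancel)
    finally have eq: "t k \<otimes> P (a#w) = D \<otimes> P (a#w0')" .
    have Dp: "D = \<one> \<or> (\<exists>p. D = gen (k-1) p False \<and> valid (k-1) p \<and> set p \<subseteq> set (a#w))"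
      using IH(1)
    proof
      assume "D0 = \<one>" then show ?thesis unfolding D_def using ta a t_sq by simp
    next
      assume "\<exists>p. D0 = gen (k-1) p False \<and> valid (k-1) p \<and> set p \<subseteq> set w"
      then obtain p where p: "D0 = gen (k-1) p False" "valid (k-1) p" "set p \<subseteq> set w" by blast
      have vp: "1 \<le> k - 1" "k - 1 + 1 < n" "set p \<subseteq> {1..<n}" "set p \<subseteq> {1..<k-1}" "sorted_wrt (<) p"
        using valid_D[OF p(2)] by auto
      have Pp: "P p \<in> carrier G" using vp P_closed by auto
      have cc: "cc (k-1) False \<in> carrier G" using vp cc_closed by auto
      have "gen (k-1) (a#p) False = (t a \<otimes> P p) \<otimes> cc (k-1) False \<otimes> inv (t a \<otimes> P p)"
        unfolding gen_def by simp
      also have "\<dots> = t a \<otimes> D0 \<otimes> inv (t a)" unfolding p(1) gen_def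
        using conj_mult[OF ta Pp cc] .
      also have "\<dots> = D" unfolding D_def using t_inv a by simp
      finally have g: "D = gen (k-1) (a#p) False" by simp
      have v: "valid (k-1) (a#p)" using p(2) p(3) sw(2) a lt unfolding valid_def by auto
      show ?thesis using g p(3) v by (intro disjI2 exI[of _ "a#p"]) auto
    qed
    have s: "sorted_wrt (<) (a#w0')" using IH(3,4) sw(2) lt by auto
    have st: "set (a#w0') \<subseteq> insert k (set (a#w))" using IH(4) by auto
    have l: "(\<forall>i\<in>set (a#w). i < k) \<longrightarrow> a#w0' = (a#w) @ [k]" using IH(5) by auto
    show ?thesis using Dp eq s st l by blast
  next
    case km1
    define D where "D = gen (k-1) [] False"
    have vD: "valid (k-1) []" using km1 a k unfolding valid_def by auto
    have ka: "k - 1 = a" using km1 by simp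
    have Dc: "D = cc a False" unfolding D_def gen_def ka using km1 cc_closed[of a False] a k by simp
    have key: "\<And>x. x \<in> carrier G \<Longrightarrow> t k \<otimes> (t a \<otimes> x) = D \<otimes> (t a \<otimes> (t k \<otimes> x))"
      unfolding Dc cc_def using km1[symmetric] a k t_closed[of a] t_closed[of k]
      by (simp add: m_assoc t_cancel)
    have Dp: "D = \<one> \<or> (\<exists>p. D = gen (k-1) p False \<and> valid (k-1) p \<and> set p \<subseteq> set (a#w))"
      using vD D_def by auto
    show ?thesis
    proof (cases w)
      case Nil
      have "t k \<otimes> P (a#w) = D \<otimes> P [a,k]" using key[of \<one>] Nil tk by simp
      moreover have "sorted_wrt (<) [a,k]" using km1 by auto
      ultimately show ?thesis using Dp Nil by (intro exI[of _ D] exI[of _ "[a,k]"]) auto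
    next
      case (Cons b w1)
      have w1: "set w1 \<subseteq> {1..<n}" "P w1 \<in> carrier G" using a Cons P_closed by auto
      show ?thesis
      proof (cases "b = k")
        case True
        have "t k \<otimes> P (a#w) = D \<otimes> (t a \<otimes> (t k \<otimes> (t k \<otimes> P w1)))"
          using key[of "P w"] Pw Cons True by simp
        also have "\<dots> = D \<otimes> P (a#w1)" using t_cancel k w1 by simp
        finally have e: "t k \<otimes> P (a#w) = D \<otimes> P (a#w1)" .
        have "sorted_wrt (<) (a#w1)" using sw Cons by auto
        moreover have "set (a#w1) \<subseteq> insert k (set (a#w))" using Cons by auto
        moreover have "\<not> (\<forall>i\<in>set (a#w). i < k)" using Cons True by auto
        ultimately show ?thesis using Dp e by blast
      next
        case False
        have "t k \<otimes> P (a#w) = D \<otimes> P (a#k#w)"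
          using key[of "P w"] Pw by simp
        moreover have "sorted_wrt (<) (a#k#w)" using sw Cons False km1 by auto
        moreover have "set (a#k#w) \<subseteq> insert k (set (a#w))" by auto
        moreover have "\<not> (\<forall>i\<in>set (a#w). i < k)" using Cons False sw km1 by auto
        ultimately show ?thesis using Dp by blast
      qed
    qed
  next
    case eq
    have "t k \<otimes> P (a#w) = \<one> \<otimes> P w" using eq t_cancel k Pw by simp
    moreover have "\<not> (\<forall>i\<in>set (a#w). i < k)" using eq by auto
    ultimately show ?thesis using sw by (intro exI[of _ "\<one>"] exI[of _ w]) auto
  next
    case gt
    have "t k \<otimes> P (a#w) = \<one> \<otimes> P (k#a#w)" using tk ta Pw by simp
    moreover have "sorted_wrt (<) (k#a#w)" using gt sw Cons.prems(1) by auto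
    moreover have "\<not> (\<forall>i\<in>set (a#w). i < k)" using gt by auto
    ultimately show ?thesis by (intro exI[of _ "\<one>"] exI[of _ "k#a#w"]) auto
  qed
qed

lemma cc_jp2:
  assumes "1 \<le> j" "j + 2 < n"
  shows "t (j+2) \<otimes> cc j True \<otimes> t (j+2) = (t j \<otimes> cc (j+1) False \<otimes> t j) \<otimes> cc j True \<otimes> cc (j+1) True"
    and "t (j+2) \<otimes> cc j False \<otimes> t (j+2) = cc (j+1) False \<otimes> cc j False \<otimes> (t j \<otimes> cc (j+1) True \<otimes> t j)"
proof -
  have c: "t j \<in> carrier G" "t (Suc j) \<in> carrier G" "t (Suc (Suc j)) \<in> carrier G"
    using assms t_closed by auto
  have s1: "\<And>x. x \<in> carrier G \<Longrightarrow> t (Suc (Suc j)) \<otimes> (t j \<otimes> x) = t j \<otimes> (t (Suc (Suc j)) \<otimes> x)"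
    "t (Suc (Suc j)) \<otimes> t j = t j \<otimes> t (Suc (Suc j))"
    "\<And>x. x \<in> carrier G \<Longrightarrow> t j \<otimes> (t j \<otimes> x) = x"
    "\<And>x. x \<in> carrier G \<Longrightarrow> t (Suc j) \<otimes> (t (Suc j) \<otimes> x) = x"
    "\<And>x. x \<in> carrier G \<Longrightarrow> t (Suc (Suc j)) \<otimes> (t (Suc (Suc j)) \<otimes> x) = x"
    "t j \<otimes> t j = \<one>" "t (Suc j) \<otimes> t (Suc j) = \<one>" "t (Suc (Suc j)) \<otimes> t (Suc (Suc j)) = \<one>"
    by ((rule t_swap t_comm t_sq t_cancel); use assms in auto)+
  have e: "j + 2 = Suc (Suc j)" "j + 1 = Suc j" "Suc j + 1 = Suc (Suc j)" by auto
  show "t (j+2) \<otimes> cc j True \<otimes> t (j+2) = (t j \<otimes> cc (j+1) False \<otimes> t j) \<otimes> cc j True \<otimes> cc (j+1) True"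
    unfolding cc_def e using c by (simp add: m_assoc s1)
  show "t (j+2) \<otimes> cc j False \<otimes> t (j+2) = cc (j+1) False \<otimes> cc j False \<otimes> (t j \<otimes> cc (j+1) True \<otimes> t j)"
    unfolding cc_def e using c by (simp add: m_assoc s1)
qed

lemma conj_t: "x \<in> carrier G \<Longrightarrow> c \<in> carrier G \<Longrightarrow> 1 \<le> k \<Longrightarrow> k < n \<Longrightarrow>
  t k \<otimes> (x \<otimes> c \<otimes> inv x) \<otimes> t k = (t k \<otimes> x) \<otimes> c \<otimes> inv (t k \<otimes> x)"
  using t_closed[of k] by (simp add: inv_mult_group t_inv m_assoc)

lemma conj_gen:
  assumes v: "valid j w" and k: "1 \<le> k" "k < n"
  shows "t k \<otimes> gen j w e \<otimes> t k \<in> H"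
proof -
  have vj: "1 \<le> j" "j + 1 < n" "set w \<subseteq> {1..<n}" "set w \<subseteq> {1..<j}" "sorted_wrt (<) w"
    using valid_D[OF v] by auto
  have Pw: "P w \<in> carrier G" using vj P_closed by auto
  have ce: "cc j e \<in> carrier G" using vj cc_closed by auto
  have tk: "t k \<in> carrier G" using k t_closed by auto
  have base: "t k \<otimes> gen j w e \<otimes> t k = (t k \<otimes> P w) \<otimes> cc j e \<otimes> inv (t k \<otimes> P w)"
    unfolding gen_def using conj_t[OF Pw ce k] .
  have wlt: "\<forall>i\<in>set w. i < j" using vj by auto
  consider (lt) "k < j" | (eq) "k = j" | (p1) "k = j + 1" | (p2) "k = j + 2" | (far) "j + 3 \<le> k" by linarith
  then show ?thesis
  proof cases
    case lt
    obtain D w' where T: "D = \<one> \<or> (\<exists>p. D = gen (k-1) p False \<and> valid (k-1) p \<and> set p \<subseteq> set w)"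
      "t k \<otimes> P w = D \<otimes> P w'" "sorted_wrt (<) w'" "set w' \<subseteq> insert k (set w)"
      using toggle[OF k vj(5) vj(3)] by blast
    have DH: "D \<in> H" using T(1) one_H gen_H by auto
    have Dc: "D \<in> carrier G" using T(1) gen_closed by auto
    have vw': "valid j w'" using T(3,4) v lt k unfolding valid_def by auto
    have Pw': "P w' \<in> carrier G" using valid_D[OF vw'] P_closed by auto
    have "t k \<otimes> gen j w e \<otimes> t k = (D \<otimes> P w') \<otimes> cc j e \<otimes> inv (D \<otimes> P w')"
      using base T(2) by simp
    also have "\<dots> = D \<otimes> gen j w' e \<otimes> inv D"
      unfolding gen_def by (rule conj_mult[OF Dc Pw' ce])
    finally show ?thesis using conj_H[OF DH gen_H[OF vw']] by simp
  next
    case eq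
    obtain D w' where T: "D = \<one> \<or> (\<exists>p. D = gen (k-1) p False \<and> valid (k-1) p \<and> set p \<subseteq> set w)"
      "t k \<otimes> P w = D \<otimes> P w'" "(\<forall>i\<in>set w. i < k) \<longrightarrow> w' = w @ [k]"
      using toggle[OF k vj(5) vj(3)] by blast
    have DH: "D \<in> H" using T(1) one_H gen_H by auto
    have Dc: "D \<in> carrier G" using T(1) gen_closed by auto
    have w': "P w' = P w \<otimes> t j" using T(3) wlt eq P_snoc[OF vj(3)] k by auto
    have "t k \<otimes> gen j w e \<otimes> t k = D \<otimes> ((P w \<otimes> t j) \<otimes> cc j e \<otimes> inv (P w \<otimes> t j)) \<otimes> inv D"
      unfolding base T(2) using conj_mult[OF Dc _ ce] Pw tk eq w' by simp
    also have "(P w \<otimes> t j) \<otimes> cc j e \<otimes> inv (P w \<otimes> t j) = gen j w (\<not> e)"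
      unfolding gen_def using conj_mult[OF Pw _ ce] tk eq cc_flip1[OF vj(1,2)] t_inv[OF vj(1)] vj
      by simp
    finally show ?thesis using conj_H[OF DH gen_H[OF v]] by simp
  next
    case p1
    have "\<forall>i\<in>set w. i+1<k \<or> k+1<i" using wlt p1 by auto
    then have cm: "t k \<otimes> P w = P w \<otimes> t k" using t_comm_P[OF vj(3) k] by auto
    have "t k \<otimes> gen j w e \<otimes> t k = P w \<otimes> (t k \<otimes> cc j e \<otimes> inv (t k)) \<otimes> inv (P w)"
      unfolding base cm using conj_mult[OF Pw tk ce] .
    also have "\<dots> = gen j w (\<not> e)" unfolding gen_def using t_inv k p1 cc_flip2[OF vj(1,2)] by simp
    finally show ?thesis using gen_H[OF v] by simp
  next
    case p2
    have "\<forall>i\<in>set w. i+1<k \<or> k+1<i" using wlt p2 by auto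
    then have cm: "t k \<otimes> P w = P w \<otimes> t k" using t_comm_P[OF vj(3) k] by auto
    have tkg: "t k \<otimes> gen j w e \<otimes> t k = P w \<otimes> (t k \<otimes> cc j e \<otimes> t k) \<otimes> inv (P w)"
      unfolding base cm using conj_mult[OF Pw tk ce] t_inv k by simp
    have j2: "j + 2 < n" using p2 k by simp
    have tj: "t j \<in> carrier G" using vj t_closed by auto
    have c1: "\<And>e'. cc (j+1) e' \<in> carrier G" using vj j2 cc_closed by auto
    have c0: "\<And>e'. cc j e' \<in> carrier G" using vj cc_closed by auto
    have v1: "valid (j+1) (w @ [j])" "valid (j+1) w"
      using v j2 unfolding valid_def by (auto simp: sorted_wrt_append)
    have g1: "\<And>e'. P w \<otimes> (t j \<otimes> cc (j+1) e' \<otimes> t j) \<otimes> inv (P w) = gen (j+1) (w @ [j]) e'"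
    proof -
      fix e'
      have ps: "P (w@[j]) = P w \<otimes> t j" using P_snoc vj by auto
      show "P w \<otimes> (t j \<otimes> cc (j+1) e' \<otimes> t j) \<otimes> inv (P w) = gen (j+1) (w @ [j]) e'"
        unfolding gen_def ps using conj_mult[OF Pw tj c1] t_inv[OF vj(1)] vj by simp
    qed
    have g2: "\<And>e' j'. P w \<otimes> cc j' e' \<otimes> inv (P w) = gen j' w e'" unfolding gen_def by simp
    have H3: "\<And>a b c. a \<in> H \<Longrightarrow> b \<in> H \<Longrightarrow> c \<in> H \<Longrightarrow> a \<otimes> b \<otimes> c \<in> H"
      using H_sub by (meson subgroup.m_closed)
    have tc: "\<And>e'. t j \<otimes> cc (j+1) e' \<otimes> t j \<in> carrier G" using tj c1 by auto
    show ?thesis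
    proof (cases e)
      case True
      have "t k \<otimes> gen j w e \<otimes> t k = P w \<otimes> ((t j \<otimes> cc (j+1) False \<otimes> t j) \<otimes> cc j True \<otimes> cc (j+1) True) \<otimes> inv (P w)"
        using tkg cc_jp2(1)[OF vj(1) j2] p2 True by simp
      also have "\<dots> = gen (j+1) (w @ [j]) False \<otimes> gen j w True \<otimes> gen (j+1) w True"
        unfolding conj_prod3[OF Pw tc c0 c1] g1 g2 ..
      finally show ?thesis using H3 gen_H v v1 by simp
    next
      case False
      have "t k \<otimes> gen j w e \<otimes> t k = P w \<otimes> (cc (j+1) False \<otimes> cc j False \<otimes> (t j \<otimes> cc (j+1) True \<otimes> t j)) \<otimes> inv (P w)"
        using tkg cc_jp2(2)[OF vj(1) j2] p2 False by simp
      also have "\<dots> = gen (j+1) w False \<otimes> gen j w False \<otimes> gen (j+1) (w @ [j]) True"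
        unfolding conj_prod3[OF Pw c1 c0 tc] g1 g2 ..
      finally show ?thesis using H3 gen_H v v1 by simp
    qed
  next
    case far
    have "\<forall>i\<in>set w. i+1<k \<or> k+1<i" using wlt far by auto
    then have cm: "t k \<otimes> P w = P w \<otimes> t k" using t_comm_P[OF vj(3) k] by auto
    have "t k \<otimes> gen j w e \<otimes> t k = P w \<otimes> (t k \<otimes> cc j e \<otimes> inv (t k)) \<otimes> inv (P w)"
      unfolding base cm using conj_mult[OF Pw tk ce] .
    also have "\<dots> = gen j w e" unfolding gen_def using t_inv k far cc_far vj by simp
    finally show ?thesis using gen_H[OF v] by simp
  qed
qed

lemma H_conj_t:
  assumes k: "1 \<le> k" "k < n" and h: "h \<in> H"
  shows "t k \<otimes> h \<otimes> t k \<in> H"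
  using h
proof (induction rule: generate.induct)
  case one
  then show ?case using t_sq[OF k] t_closed[OF k] one_H by simp
next
  case (incl h)
  then obtain j w e where "h = gen j w e" "valid j w" unfolding S_def by blast
  then show ?case using conj_gen k by simp
next
  case (inv h)
  then obtain j w e where hg: "h = gen j w e" "valid j w" unfolding S_def by blast
  have hc: "h \<in> carrier G" using hg gen_closed by simp
  have tk: "t k \<in> carrier G" using k t_closed by simp
  have "t k \<otimes> inv h \<otimes> t k = inv (t k \<otimes> h \<otimes> t k)"
    using hc tk t_inv[OF k] by (simp add: inv_mult_group m_assoc)
  then show ?case using conj_gen[OF hg(2) k] hg(1) H_sub subgroup.m_inv_closed by fastforce
next
  case (eng h1 h2)
  have c: "h1 \<in> carrier G" "h2 \<in> carrier G" using eng.hyps generate_in_carrier S_carrier by auto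
  have tk: "t k \<in> carrier G" using k t_closed by simp
  have "t k \<otimes> (h1 \<otimes> h2) \<otimes> t k = (t k \<otimes> h1 \<otimes> t k) \<otimes> (t k \<otimes> h2 \<otimes> t k)"
    using c tk t_sq[OF k] by (simp add: m_assoc[symmetric]) (simp add: m_assoc t_cancel[OF k])
  then show ?case using eng.IH H_sub subgroup.m_closed by fastforce
qed

lemma H_normal_P: "set w \<subseteq> {1..<n} \<Longrightarrow> h \<in> H \<Longrightarrow> P w \<otimes> h \<otimes> inv (P w) \<in> H"
proof (induction w arbitrary: h)
  case Nil
  have "h \<in> carrier G" using generate_in_carrier[OF S_carrier] Nil(2) by blast
  then show ?case using Nil(2) by simp
next
  case (Cons a w)
  have a: "1 \<le> a" "a < n" "set w \<subseteq> {1..<n}" using Cons.prems by auto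
  have hc: "h \<in> carrier G" using generate_in_carrier[OF S_carrier] Cons.prems(2) by blast
  have c: "t a \<in> carrier G" "P w \<in> carrier G" "h \<in> carrier G"
    using a t_closed P_closed hc by auto
  have "P (a#w) \<otimes> h \<otimes> inv (P (a#w)) = t a \<otimes> (P w \<otimes> h \<otimes> inv (P w)) \<otimes> t a"
    using conj_mult[OF c] t_inv[OF a(1,2)] by simp
  then show ?case using H_conj_t[OF a(1,2) Cons.IH[OF a(3) Cons.prems(2)]] by simp
qed

lemma H_normal: "x \<in> carrier G \<Longrightarrow> h \<in> H \<Longrightarrow> x \<otimes> h \<otimes> inv x \<in> H"
proof -
  assume x: "x \<in> carrier G" and h: "h \<in> H"
  obtain w where "set w \<subseteq> {1..<n}" "x = P w" using carrier_P[OF x] by blast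
  then show ?thesis using H_normal_P h by simp
qed

lemma H_mult: "a \<in> H \<Longrightarrow> b \<in> H \<Longrightarrow> a \<otimes> b \<in> H"
  by (rule subgroup.m_closed[OF H_sub])

lemma H_inv: "a \<in> H \<Longrightarrow> inv a \<in> H"
  by (rule subgroup.m_inv_closed[OF H_sub])

lemma comm_tt:
  assumes a: "1 \<le> a" "a < n" and b: "1 \<le> b" "b < n"
  shows "t a \<otimes> t b \<otimes> inv (t a) \<otimes> inv (t b) \<in> H"
proof -
  have c: "t a \<in> carrier G" "t b \<in> carrier G" using a b t_closed by auto
  have e: "t a \<otimes> t b \<otimes> inv (t a) \<otimes> inv (t b) = t a \<otimes> t b \<otimes> t a \<otimes> t b"
    using t_inv a b by simp
  have sq: "t a \<otimes> t a = \<one>" "t b \<otimes> t b = \<one>" using t_sq a b by auto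
  consider "a = b" | "a + 1 < b" | "b + 1 < a" | "b = a + 1" | "a = b + 1" by linarith
  then show ?thesis
  proof cases
    case 1
    have "t a \<otimes> t b \<otimes> t a \<otimes> t b = (t a \<otimes> t a) \<otimes> (t a \<otimes> t a)"
      using 1 c by (simp add: m_assoc)
    then show ?thesis using e sq one_H by simp
  next
    case 2
    have cm: "t b \<otimes> t a = t a \<otimes> t b" using t_comm a b 2 by simp
    have "t a \<otimes> t b \<otimes> t a \<otimes> t b = t a \<otimes> (t b \<otimes> t a) \<otimes> t b" using c by (simp add: m_assoc)
    also have "\<dots> = t a \<otimes> (t a \<otimes> t b) \<otimes> t b" unfolding cm ..
    also have "\<dots> = (t a \<otimes> t a) \<otimes> (t b \<otimes> t b)" using c by (simp add: m_assoc)
    finally show ?thesis using e sq one_H by simp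
  next
    case 3
    have cm: "t a \<otimes> t b = t b \<otimes> t a" using t_comm a b 3 by simp
    have "t a \<otimes> t b \<otimes> t a \<otimes> t b = (t a \<otimes> t b) \<otimes> (t a \<otimes> t b)" using c by (simp add: m_assoc)
    also have "\<dots> = (t b \<otimes> t a) \<otimes> (t a \<otimes> t b)" unfolding cm ..
    also have "\<dots> = t b \<otimes> (t a \<otimes> t a) \<otimes> t b" using c by (simp add: m_assoc)
    finally show ?thesis using e sq one_H c by simp
  next
    case 4
    have "valid a []" using a b 4 unfolding valid_def by auto
    then have g: "gen a [] True \<in> H" by (rule gen_H)
    have "gen a [] True = t a \<otimes> t b \<otimes> t a \<otimes> t b"
      unfolding gen_def cc_def using 4 c by simp
    then show ?thesis using e g by simp
  next
    case 5
    have "valid b []" using a b 5 unfolding valid_def by auto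
    then have g: "gen b [] False \<in> H" by (rule gen_H)
    have "gen b [] False = t a \<otimes> t b \<otimes> t a \<otimes> t b"
      unfolding gen_def cc_def using 5 c by simp
    then show ?thesis using e g by simp
  qed
qed

lemma comm_Pt: "set w \<subseteq> {1..<n} \<Longrightarrow> 1 \<le> b \<Longrightarrow> b < n \<Longrightarrow>
   P w \<otimes> t b \<otimes> inv (P w) \<otimes> inv (t b) \<in> H"
proof (induction w)
  case Nil
  then show ?case using t_closed one_H by simp
next
  case (Cons a w)
  have a: "1 \<le> a" "a < n" "set w \<subseteq> {1..<n}" using Cons.prems by auto
  have c: "t a \<in> carrier G" "P w \<in> carrier G" "t b \<in> carrier G"
    using a t_closed P_closed Cons.prems by auto
  have "P (a#w) \<otimes> t b \<otimes> inv (P (a#w)) \<otimes> inv (t b)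
     = t a \<otimes> (P w \<otimes> t b \<otimes> inv (P w) \<otimes> inv (t b)) \<otimes> inv (t a) \<otimes> (t a \<otimes> t b \<otimes> inv (t a) \<otimes> inv (t b))"
    using comm_mult[OF c] by simp
  moreover have "t a \<otimes> (P w \<otimes> t b \<otimes> inv (P w) \<otimes> inv (t b)) \<otimes> inv (t a) \<in> H"
    using H_normal c Cons.IH a Cons.prems by simp
  ultimately show ?case using H_mult comm_tt[OF a(1,2) Cons.prems(2,3)] by simp
qed

lemma comm_xP: "set w \<subseteq> {1..<n} \<Longrightarrow> x \<in> carrier G \<Longrightarrow>
   x \<otimes> P w \<otimes> inv x \<otimes> inv (P w) \<in> H"
proof (induction w)
  case Nil
  then show ?case using one_H by simp
next
  case (Cons a w)
  have a: "1 \<le> a" "a < n" "set w \<subseteq> {1..<n}" using Cons.prems by auto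
  have c: "t a \<in> carrier G" "P w \<in> carrier G" "x \<in> carrier G"
    using a t_closed P_closed Cons.prems by auto
  obtain v where v: "set v \<subseteq> {1..<n}" "x = P v" using carrier_P[OF c(3)] by blast
  have h1: "x \<otimes> P w \<otimes> inv x \<otimes> inv (P w) \<in> H" using Cons.IH a c by simp
  have h2: "x \<otimes> t a \<otimes> inv x \<otimes> inv (t a) \<in> H" using comm_Pt[OF v(1) a(1,2)] v by simp
  have "inv (x \<otimes> P (a#w) \<otimes> inv x \<otimes> inv (P (a#w))) = (t a \<otimes> P w) \<otimes> x \<otimes> inv (t a \<otimes> P w) \<otimes> inv x"
    using comm_inv c by simp
  also have "\<dots> = t a \<otimes> (P w \<otimes> x \<otimes> inv (P w) \<otimes> inv x) \<otimes> inv (t a) \<otimes> (t a \<otimes> x \<otimes> inv (t a) \<otimes> inv x)"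
    using comm_mult[OF c(1,2,3)] .
  finally have eq: "inv (x \<otimes> P (a#w) \<otimes> inv x \<otimes> inv (P (a#w))) = t a \<otimes> (P w \<otimes> x \<otimes> inv (P w) \<otimes> inv x) \<otimes> inv (t a) \<otimes> (t a \<otimes> x \<otimes> inv (t a) \<otimes> inv x)" .
  have i1: "P w \<otimes> x \<otimes> inv (P w) \<otimes> inv x \<in> H"
    using H_inv[OF h1] comm_inv c by simp
  have i2: "t a \<otimes> x \<otimes> inv (t a) \<otimes> inv x \<in> H"
    using H_inv[OF h2] comm_inv c by simp
  have "inv (x \<otimes> P (a#w) \<otimes> inv x \<otimes> inv (P (a#w))) \<in> H"
    unfolding eq using H_mult H_normal[OF c(1) i1] i2 by simp
  then have "inv (inv (x \<otimes> P (a#w) \<otimes> inv x \<otimes> inv (P (a#w)))) \<in> H" using H_inv by blast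
  then show ?case using c by simp
qed

lemma comm_xy: "x \<in> carrier G \<Longrightarrow> y \<in> carrier G \<Longrightarrow> x \<otimes> y \<otimes> inv x \<otimes> inv y \<in> H"
proof -
  assume x: "x \<in> carrier G" and y: "y \<in> carrier G"
  obtain w where "set w \<subseteq> {1..<n}" "y = P w" using carrier_P[OF y] by blast
  then show ?thesis using comm_xP x by simp
qed

lemma (in group) conj_comm: "p \<in> carrier G \<Longrightarrow> a \<in> carrier G \<Longrightarrow> b \<in> carrier G \<Longrightarrow>
  (p \<otimes> a \<otimes> inv p) \<otimes> (p \<otimes> b \<otimes> inv p) \<otimes> inv (p \<otimes> a \<otimes> inv p) \<otimes> inv (p \<otimes> b \<otimes> inv p)
  = p \<otimes> (a \<otimes> b \<otimes> inv a \<otimes> inv b) \<otimes> inv p"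
  by (simp add: inv_mult_group m_assoc cancel_l2)

lemma S_derived: "S \<subseteq> derived G (carrier G)"
proof
  fix g assume "g \<in> S"
  then obtain j w e where g: "g = gen j w e" "valid j w" unfolding S_def by blast
  have vj: "1 \<le> j" "j + 1 < n" "set w \<subseteq> {1..<n}" using valid_D[OF g(2)] by auto
  have c: "P w \<in> carrier G" "t j \<in> carrier G" "t (j+1) \<in> carrier G"
    using vj P_closed t_closed by auto
  define x where "x = P w \<otimes> t j \<otimes> inv (P w)"
  define y where "y = P w \<otimes> t (j+1) \<otimes> inv (P w)"
  have xy: "x \<in> carrier G" "y \<in> carrier G" unfolding x_def y_def using c by auto
  have i: "inv (t j) = t j" "inv (t (j+1)) = t (j+1)" using t_inv vj by auto
  have "g = (if e then x \<otimes> y \<otimes> inv x \<otimes> inv y else y \<otimes> x \<otimes> inv y \<otimes> inv x)"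
    unfolding g gen_def cc_def x_def y_def conj_comm[OF c(1,2,3)] conj_comm[OF c(1,3,2)] i by simp
  then have "g \<in> derived_set G (carrier G)" using xy by (cases e) auto
  then show "g \<in> derived G (carrier G)" unfolding derived_def by (rule generate.incl)
qed

theorem main: "derived G (carrier G) = generate G S"
proof
  show "derived G (carrier G) \<subseteq> generate G S"
    unfolding derived_def
    by (rule generate_subgroup_incl[OF _ H_sub]) (auto intro: comm_xy)
  show "generate G S \<subseteq> derived G (carrier G)"
    by (rule generate_subgroup_incl[OF S_derived derived_is_subgroup]) simp
qed

lemma S_eq:
  "{ P w \<otimes> (t j \<otimes> t (j+1) \<otimes> t j \<otimes> t (j+1)) \<otimes> inv (P w)
         | j w. j \<in> {1..n-2} \<and> sorted_wrt (<) w \<and> set w \<subseteq> {1..<j} }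
     \<union> { P w \<otimes> (t (j+1) \<otimes> t j \<otimes> t (j+1) \<otimes> t j) \<otimes> inv (P w)
         | j w. j \<in> {1..n-2} \<and> sorted_wrt (<) w \<and> set w \<subseteq> {1..<j} } = S" (is "?A \<union> ?B = S")
proof
  show "S \<subseteq> ?A \<union> ?B"
  proof
    fix g assume "g \<in> S"
    then obtain j w e where g: "g = gen j w e" "valid j w" unfolding S_def by blast
    then show "g \<in> ?A \<union> ?B" unfolding gen_def cc_def valid_def by (cases e) auto
  qed
next
  show "?A \<union> ?B \<subseteq> S"
  proof
    fix g assume "g \<in> ?A \<union> ?B"
    then consider (a) j w where "g = gen j w True" "valid j w" | (b) j w where "g = gen j w False" "valid j w"
      unfolding gen_def cc_def valid_def by auto
    then show "g \<in> S" unfolding S_def by cases blast+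
  qed
qed

theorem main':
  "derived G (carrier G) = generate G
    ({ P w \<otimes> (t j \<otimes> t (j+1) \<otimes> t j \<otimes> t (j+1)) \<otimes> inv (P w)
         | j w. j \<in> {1..n-2} \<and> sorted_wrt (<) w \<and> set w \<subseteq> {1..<j} }
     \<union> { P w \<otimes> (t (j+1) \<otimes> t j \<otimes> t (j+1) \<otimes> t j) \<otimes> inv (P w)
         | j w. j \<in> {1..n-2} \<and> sorted_wrt (<) w \<and> set w \<subseteq> {1..<j} })"
  unfolding S_eq by (rule main)

end

lemma tw_prod_tp: "tw_prod n = tp (TW n) (tau n)"
  by (rule ext) (simp add: tw_prod_def tp_def)

lemma TW_twg: "twg (TW n) (tau n) n"
proof (rule twg.intro[OF TW_group], rule twg_axioms.intro)
  show "\<And>i. 1 \<le> i \<Longrightarrow> i < n \<Longrightarrow> tau n i \<in> carrier (TW n)" by (rule tau_carrier)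
  show "\<And>i. 1 \<le> i \<Longrightarrow> i < n \<Longrightarrow> tau n i \<otimes>\<^bsub>TW n\<^esub> tau n i = \<one>\<^bsub>TW n\<^esub>" by (rule tau_sq)
  show "\<And>i j. 1 \<le> i \<Longrightarrow> i < n \<Longrightarrow> 1 \<le> j \<Longrightarrow> j < n \<Longrightarrow> i + 1 < j \<Longrightarrow>
     tau n j \<otimes>\<^bsub>TW n\<^esub> tau n i = tau n i \<otimes>\<^bsub>TW n\<^esub> tau n j"
    using tau_comm by metis
  show "\<And>x. x \<in> carrier (TW n) \<Longrightarrow> \<exists>w. set w \<subseteq> {1..<n} \<and> x = tp (TW n) (tau n) w"
    using TW_carrier_prod tw_prod_tp by auto
qed

theorem lemma2p1:
  fixes n :: nat
  assumes "n \<ge> 3"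
  shows "derived (TW n) (carrier (TW n)) =
    generate (TW n)
      ({ tw_prod n w \<otimes>\<^bsub>TW n\<^esub>
           (tau n j \<otimes>\<^bsub>TW n\<^esub> tau n (j+1) \<otimes>\<^bsub>TW n\<^esub> tau n j \<otimes>\<^bsub>TW n\<^esub> tau n (j+1))
         \<otimes>\<^bsub>TW n\<^esub> inv\<^bsub>TW n\<^esub> (tw_prod n w)
         | j w. j \<in> {1..n-2} \<and> sorted_wrt (<) w \<and> set w \<subseteq> {1..<j} }
     \<union> { tw_prod n w \<otimes>\<^bsub>TW n\<^esub>
           (tau n (j+1) \<otimes>\<^bsub>TW n\<^esub> tau n j \<otimes>\<^bsub>TW n\<^esub> tau n (j+1) \<otimes>\<^bsub>TW n\<^esub> tau n j)
         \<otimes>\<^bsub>TW n\<^esub> inv\<^bsub>TW n\<^esub> (tw_prod n w)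
         | j w. j \<in> {1..n-2} \<and> sorted_wrt (<) w \<and> set w \<subseteq> {1..<j} })"
proof -
  interpret twg "TW n" "tau n" n by (rule TW_twg)
  show ?thesis unfolding tw_prod_tp by (rule main')
qed

end
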